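(* Let $\mathbb{X}$ be a smooth reflexive real Banach space with the Kadets–Klee property and $\mathbb{Y}$ a smooth real Banach space. Let $T\in\mathbb{L}(\mathbb{X},\mathbb{Y})$ be of rank one with $\|T\|=1$. If $M_T=\{\pm x\}$ and $(x,Tx)$ is a CPP, then $T$ is not an extreme contraction.
   Context: All Banach spaces are real and of dimension greater than $1$. $\mathbb{X}$ has the Kadets–Klee property if whenever $x_n\rightharpoonup x$ weakly and $\|x_n\|\to\|x\|$, then $x_n\to x$ in norm. $M_T=\{x\in S_{\mathbb{X}}:\|Tx\|=\|T\|\}$. A norm one $T$ is an extreme contraction if it is an extreme point of the closed unit ball of $\mathbb{L}(\mathbb{X},\mathbb{Y})$. $B(x,r)=\{u:\|u-x\|<r\}$. $x\perp_B y$ means $\|x+\lambda y\|\ge\|x\|$ for all real $\lambda$; $x^\perp=\{y:x\perp_By\}$. For $x\in S_{\mathbb{X}}$, $y\in S_{\mathbb{Y}}$, $(x,y)$ is a CPP if there exist $r>0,\mu>0$ such that for all $z\in x^\perp\cap S_{\mathbb{X}}$, all $w\in y^\perp\cap S_{\mathbb{Y}}$ and all $a,b\in\mathbb{R}$, $ax+bz\in B(x,r)\cap S_{\mathbb{X}}$ implies $\|ay+b\mu w\|\le1$. *)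

theory Defs
  imports "HOL-Analysis.Analysis"
begin

definition dim_gt_one :: "'a::real_vector itself \<Rightarrow> bool" where
  "dim_gt_one _ \<longleftrightarrow> (\<exists>u v::'a. u \<noteq> v \<and> independent {u, v})"

definition smooth_space :: "'a::real_normed_vector itself \<Rightarrow> bool" where
  "smooth_space _ \<longleftrightarrow>
     (\<forall>x::'a. norm x = 1 \<longrightarrow> (\<exists>!f::'a \<Rightarrow>\<^sub>L real. norm f = 1 \<and> blinfun_apply f x = 1))"

definition reflexive_space :: "'a::real_normed_vector itself \<Rightarrow> bool" where
  "reflexive_space _ \<longleftrightarrow>
     (\<forall>\<phi>::('a \<Rightarrow>\<^sub>L real) \<Rightarrow>\<^sub>L real. \<exists>x::'a. \<forall>f. blinfun_apply \<phi> f = blinfun_apply f x)"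

definition weak_conv :: "(nat \<Rightarrow> 'a::real_normed_vector) \<Rightarrow> 'a \<Rightarrow> bool" where
  "weak_conv xs x \<longleftrightarrow>
     (\<forall>f::'a \<Rightarrow>\<^sub>L real. (\<lambda>n. blinfun_apply f (xs n)) \<longlonglongrightarrow> blinfun_apply f x)"

definition kadets_klee :: "'a::real_normed_vector itself \<Rightarrow> bool" where
  "kadets_klee _ \<longleftrightarrow>
     (\<forall>(xs::nat \<Rightarrow> 'a) x. weak_conv xs x \<and> (\<lambda>n. norm (xs n)) \<longlonglongrightarrow> norm x
        \<longrightarrow> xs \<longlonglongrightarrow> x)"

definition norm_attain_set :: "('a::real_normed_vector \<Rightarrow>\<^sub>L 'b::real_normed_vector) \<Rightarrow> 'a set" where
  "norm_attain_set T = {x. norm x = 1 \<and> norm (blinfun_apply T x) = norm T}"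

definition extreme_contraction :: "('a::real_normed_vector \<Rightarrow>\<^sub>L 'b::real_normed_vector) \<Rightarrow> bool" where
  "extreme_contraction T \<longleftrightarrow> norm T = 1 \<and> T extreme_point_of (cball 0 1)"

definition rank_one :: "('a::real_normed_vector \<Rightarrow>\<^sub>L 'b::real_normed_vector) \<Rightarrow> bool" where
  "rank_one T \<longleftrightarrow> (\<exists>y. y \<noteq> 0 \<and> range (blinfun_apply T) = span {y})"

definition birkhoff_orth :: "'a::real_normed_vector \<Rightarrow> 'a \<Rightarrow> bool" where
  "birkhoff_orth x y \<longleftrightarrow> (\<forall>t::real. norm (x + t *\<^sub>R y) \<ge> norm x)"

definition orth_set :: "'a::real_normed_vector \<Rightarrow> 'a set" where
  "orth_set x = {y. birkhoff_orth x y}"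

definition CPP :: "'a::real_normed_vector \<Rightarrow> 'b::real_normed_vector \<Rightarrow> bool" where
  "CPP x y \<longleftrightarrow> norm x = 1 \<and> norm y = 1 \<and>
     (\<exists>r>0. \<exists>\<mu>>0. \<forall>z \<in> orth_set x \<inter> sphere 0 1. \<forall>w \<in> orth_set y \<inter> sphere 0 1.
        \<forall>a b::real. a *\<^sub>R x + b *\<^sub>R z \<in> ball x r \<inter> sphere 0 1
           \<longrightarrow> norm (a *\<^sub>R y + (b * \<mu>) *\<^sub>R w) \<le> 1)"

end

theory Submission
  imports Defs
begin

definition ultra :: "'a filter \<Rightarrow> bool" where
  "ultra U \<longleftrightarrow> U \<noteq> bot \<and> (\<forall>P. eventually P U \<or> eventually (\<lambda>x. \<not> P x) U)"

lemma ultra_exists: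
  fixes F :: "'a filter"
  assumes F: "F \<noteq> bot"
  shows "\<exists>U\<le>F. ultra U"
proof -
  let ?R = "{(b, a). a \<noteq> bot \<and> a \<le> b \<and> b \<le> F}"
  have bot_notin_R: "c \<in> Chains ?R \<Longrightarrow> bot \<notin> c" for c
    by (auto simp: Chains_def)
  have FR: "Field ?R = {G. G \<noteq> bot \<and> G \<le> F}"
    by (auto simp: Field_def bot_unique)
  have "\<exists>m\<in>Field ?R. \<forall>a\<in>Field ?R. (m, a) \<in> ?R \<longrightarrow> a = m"
  proof (rule Zorns_po_lemma)
    show "Partial_order ?R"
      by (auto simp: partial_order_on_def preorder_on_def
          antisym_def refl_on_def trans_def Field_def bot_unique)
    show "\<exists>u\<in>Field ?R. \<forall>a\<in>C. (a, u) \<in> ?R" if C: "C \<in> Chains ?R" for C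
    proof (unfold FR, simp, intro exI conjI ballI)
      have Inf_C: "Inf C \<noteq> bot" "Inf C \<le> F" if "C \<noteq> {}"
      proof -
        from C that have "Inf C = bot \<longleftrightarrow> (\<exists>x\<in>C. x = bot)"
          unfolding trivial_limit_def by (intro eventually_Inf_base) (auto simp: Chains_def)
        with C show "Inf C \<noteq> bot"
          by (simp add: bot_notin_R)
        from that obtain x where "x \<in> C" by auto
        with C show "Inf C \<le> F"
          by (auto intro!: Inf_lower2[of x] simp: Chains_def)
      qed
      then have [simp]: "inf F (Inf C) = (if C = {} then F else Inf C)"
        using C by (auto simp add: inf_absorb2)
      from C show "inf F (Inf C) \<noteq> bot"
        by (simp add: F Inf_C)
      from C show "inf F (Inf C) \<le> F"
        by (simp add: Chains_def Inf_C F)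
      with C show "inf F (Inf C) \<le> x" "x \<le> F" if "x \<in> C" for x
        using that  by (auto intro: Inf_lower simp: Chains_def)
    qed
  qed
  then obtain U where U: "U \<noteq> bot" "U \<le> F" and mx: "\<And>G. G \<noteq> bot \<Longrightarrow> G \<le> U \<Longrightarrow> G = U"
    unfolding FR by auto
  have "ultra U"
    unfolding ultra_def
  proof (intro conjI allI U(1) disjCI)
    fix P assume "\<not> (\<forall>\<^sub>Fx in U. \<not> P x)"
    then have "inf U (principal {x. P x}) \<noteq> bot"
      by (simp add: trivial_limit_def eventually_inf_principal not_eventually)
    then have e: "inf U (principal {x. P x}) = U" by (rule mx) simp
    have "eventually P (inf U (principal {x. P x}))"
      by (simp add: eventually_inf_principal)
    then show "eventually P U" by (simp only: e)
  qed
  with U show ?thesis by blast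
qed

lemma ultra_lim:
  fixes s :: "'a \<Rightarrow> real"
  assumes U: "ultra U" and B: "\<And>n. \<bar>s n\<bar> \<le> B"
  shows "\<exists>L. (s \<longlongrightarrow> L) U"
proof -
  have Ub: "U \<noteq> bot" using U by (simp add: ultra_def)
  let ?G = "filtermap s U"
  have "?G \<noteq> bot" using Ub by (simp add: filtermap_bot_iff)
  moreover have "eventually (\<lambda>x. x \<in> cball 0 B) ?G"
    using B by (simp add: eventually_filtermap)
  ultimately obtain L where L: "inf (nhds L) ?G \<noteq> bot"
    using compact_cball[of "0::real" B] unfolding compact_filter by blast
  have "(s \<longlongrightarrow> L) U"
  proof (rule topological_tendstoI)
    fix S assume S: "open S" "L \<in> S"
    show "eventually (\<lambda>n. s n \<in> S) U"
    proof (rule ccontr)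
      assume "\<not> ?thesis"
      then have "eventually (\<lambda>n. s n \<notin> S) U" using U unfolding ultra_def by blast
      then have "eventually (\<lambda>x. x \<notin> S) ?G" by (simp add: eventually_filtermap)
      moreover have "eventually (\<lambda>x. x \<in> S) (nhds L)" using S by (rule eventually_nhds_in_open)
      ultimately have "eventually (\<lambda>x. False) (inf (nhds L) ?G)"
        unfolding eventually_inf by blast
      with L show False by (simp add: trivial_limit_def)
    qed
  qed
  then show ?thesis by blast
qed


lemma weak_lim:
  fixes g :: "'a::banach \<Rightarrow>\<^sub>L real" and v :: "nat \<Rightarrow> 'a" and x :: 'a
  assumes refl: "reflexive_space TYPE('a)" and sm: "smooth_space TYPE('a)"
    and vn: "\<And>n. norm (v n) = 1"
    and gv: "(\<lambda>n. blinfun_apply g (v n)) \<longlonglongrightarrow> 1"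
    and uniq: "\<And>u. norm u \<le> 1 \<Longrightarrow> blinfun_apply g u = 1 \<Longrightarrow> u = x"
  shows "weak_conv v x"
  unfolding weak_conv_def
proof
  fix h :: "'a \<Rightarrow>\<^sub>L real"
  show "(\<lambda>n. blinfun_apply h (v n)) \<longlonglongrightarrow> blinfun_apply h x"
  proof (rule ccontr)
    assume "\<not> ?thesis"
    then obtain e :: real where e: "e > 0"
      and fr: "\<not> eventually (\<lambda>n. dist (blinfun_apply h (v n)) (blinfun_apply h x) < e) sequentially"
      unfolding tendsto_iff by blast
    define A where "A = {n. \<not> dist (blinfun_apply h (v n)) (blinfun_apply h x) < e}"
    have Fnb: "inf sequentially (principal A) \<noteq> bot"
      using fr by (simp add: A_def trivial_limit_def eventually_inf_principal not_eventually)
    obtain U where UF: "U \<le> inf sequentially (principal A)" and U: "ultra U"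
      using ultra_exists[OF Fnb] by blast
    have Ub: "U \<noteq> bot" using U by (simp add: ultra_def)
    have Useq: "U \<le> sequentially" using UF by (meson inf.boundedE)
    have UA: "eventually (\<lambda>n. n \<in> A) U"
      using UF by (metis eventually_principal inf.boundedE le_filter_def)
    have bnd: "\<bar>blinfun_apply k (v n)\<bar> \<le> norm k" for k :: "'a \<Rightarrow>\<^sub>L real" and n
      using norm_blinfun[of k "v n"] vn[of n] by simp
    define \<Phi> where "\<Phi> k = Lim U (\<lambda>n. blinfun_apply k (v n))" for k :: "'a \<Rightarrow>\<^sub>L real"
    have lim: "((\<lambda>n. blinfun_apply k (v n)) \<longlongrightarrow> \<Phi> k) U" for k
    proof -
      obtain L where "((\<lambda>n. blinfun_apply k (v n)) \<longlongrightarrow> L) U"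
        using ultra_lim[OF U, of "\<lambda>n. blinfun_apply k (v n)" "norm k"] bnd by blast
      then show ?thesis unfolding \<Phi>_def using Ub tendsto_Lim by blast
    qed
    have add: "\<Phi> (a + b) = \<Phi> a + \<Phi> b" for a b
    proof -
      have "((\<lambda>n. blinfun_apply (a + b) (v n)) \<longlongrightarrow> \<Phi> a + \<Phi> b) U"
        using tendsto_add[OF lim[of a] lim[of b]] by (simp add: plus_blinfun.rep_eq)
      then show ?thesis using tendsto_unique[OF Ub lim[of "a+b"]] by blast
    qed
    have scl: "\<Phi> (r *\<^sub>R a) = r *\<^sub>R \<Phi> a" for r a
    proof -
      have "((\<lambda>n. blinfun_apply (r *\<^sub>R a) (v n)) \<longlongrightarrow> r * \<Phi> a) U"
        using tendsto_mult[OF tendsto_const[of r] lim[of a]] by (simp add: scaleR_blinfun.rep_eq)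
      then show ?thesis using tendsto_unique[OF Ub lim[of "r *\<^sub>R a"]] by simp
    qed
    have nb: "norm (\<Phi> k) \<le> norm k * 1" for k
    proof -
      have "\<bar>\<Phi> k\<bar> \<le> norm k"
        by (rule tendsto_le[OF Ub tendsto_const tendsto_rabs[OF lim[of k]]]) (simp add: bnd)
      then show ?thesis by simp
    qed
    have bl: "bounded_linear \<Phi>"
      by (rule bounded_linear_intro[OF add scl nb])
    obtain u where u: "\<And>k. blinfun_apply (Blinfun \<Phi>) k = blinfun_apply k u"
      using refl unfolding reflexive_space_def by blast
    have u': "\<Phi> k = blinfun_apply k u" for k
      using u[of k] bounded_linear_Blinfun_apply[OF bl] by simp
    have "((\<lambda>n. blinfun_apply g (v n)) \<longlongrightarrow> 1) U"
      using tendsto_mono[OF Useq gv] .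
    then have gu: "blinfun_apply g u = 1"
      using tendsto_unique[OF Ub lim[of g]] u' by simp
    have nu: "norm u \<le> 1"
    proof (cases "u = 0")
      case True then show ?thesis by simp
    next
      case False
      then have "norm (u /\<^sub>R norm u) = 1" by simp
      then obtain k :: "'a \<Rightarrow>\<^sub>L real" where k: "norm k = 1" "blinfun_apply k (u /\<^sub>R norm u) = 1"
        using sm unfolding smooth_space_def by blast
      have "blinfun_apply k u = norm u"
        using k(2) False by (simp add: blinfun.scaleR_right field_simps)
      then have "norm u = \<Phi> k" using u' by simp
      also have "\<dots> \<le> 1" using nb[of k] k(1) by simp
      finally show ?thesis .
    qed
    have "u = x" using uniq[OF nu gu] .
    then have "((\<lambda>n. blinfun_apply h (v n)) \<longlongrightarrow> blinfun_apply h x) U"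
      using lim[of h] u' by simp
    then have "eventually (\<lambda>n. dist (blinfun_apply h (v n)) (blinfun_apply h x) < e) U"
      using e by (simp add: tendsto_iff)
    with UA have "eventually (\<lambda>n. False) U"
      by eventually_elim (simp add: A_def)
    with Ub show False by (simp add: trivial_limit_def)
  qed
qed


lemma gap:
  fixes g :: "'a::banach \<Rightarrow>\<^sub>L real" and x :: 'a and r :: real
  assumes refl: "reflexive_space TYPE('a)" and sm: "smooth_space TYPE('a)"
    and kk: "kadets_klee TYPE('a)" and r: "r > 0" and gn: "norm g \<le> 1" and nx: "norm x = 1"
    and uniq: "\<And>u. norm u \<le> 1 \<Longrightarrow> blinfun_apply g u = 1 \<Longrightarrow> u = x"
  shows "\<exists>\<delta>>0. \<forall>u. norm u = 1 \<longrightarrow> norm (u - x) \<ge> r \<longrightarrow> norm (u + x) \<ge> r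
            \<longrightarrow> \<bar>blinfun_apply g u\<bar> \<le> 1 - \<delta>"
proof (rule ccontr)
  assume neg: "\<not> ?thesis"
  have ex: "\<exists>u. norm u = 1 \<and> norm (u - x) \<ge> r \<and> norm (u + x) \<ge> r
      \<and> \<bar>blinfun_apply g u\<bar> > 1 - inverse (real (Suc n))" for n
  proof -
    have "inverse (real (Suc n)) > 0" by simp
    with neg show ?thesis by (auto simp: not_le)
  qed
  have "\<forall>n. \<exists>u. norm u = 1 \<and> norm (u - x) \<ge> r \<and> norm (u + x) \<ge> r
      \<and> \<bar>blinfun_apply g u\<bar> > 1 - inverse (real (Suc n))" using ex by blast
  from choice[OF this] obtain w where w0: "\<forall>n. norm (w n) = 1 \<and> norm (w n - x) \<ge> r \<and> norm (w n + x) \<ge> r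
      \<and> \<bar>blinfun_apply g (w n)\<bar> > 1 - inverse (real (Suc n))"
    ..
  have w: "\<And>n. norm (w n) = 1" "\<And>n. norm (w n - x) \<ge> r" "\<And>n. norm (w n + x) \<ge> r"
      "\<And>n. \<bar>blinfun_apply g (w n)\<bar> > 1 - inverse (real (Suc n))"
    using w0 by auto
  define v where "v n = (if blinfun_apply g (w n) \<ge> 0 then w n else - w n)" for n
  have vn: "norm (v n) = 1" for n using w(1)[of n] by (simp add: v_def)
  have vx: "norm (v n - x) \<ge> r" for n
    using w(2)[of n] w(3)[of n] by (simp add: v_def norm_minus_commute[of "- w n" x]
        add.commute)
  have gvn: "blinfun_apply g (v n) = \<bar>blinfun_apply g (w n)\<bar>" for n
    by (simp add: v_def blinfun.minus_right)
  have up: "blinfun_apply g (v n) \<le> 1" for n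
  proof -
    have "\<bar>blinfun_apply g (v n)\<bar> \<le> norm g * norm (v n)" using norm_blinfun[of g "v n"] by simp
    then have "\<bar>blinfun_apply g (v n)\<bar> \<le> norm g" by (simp add: vn)
    then show ?thesis using gn by linarith
  qed
  have gv: "(\<lambda>n. blinfun_apply g (v n)) \<longlonglongrightarrow> 1"
  proof (rule tendsto_sandwich[of "\<lambda>n. 1 - inverse (real (Suc n))" _ _ "\<lambda>n. 1"])
    show "\<forall>\<^sub>F n in sequentially. 1 - inverse (real (Suc n)) \<le> blinfun_apply g (v n)"
      using w(4) gvn by (simp add: less_imp_le)
    show "\<forall>\<^sub>F n in sequentially. blinfun_apply g (v n) \<le> 1" using up by simp
    show "(\<lambda>n. 1 - inverse (real (Suc n))) \<longlonglongrightarrow> 1"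
      using tendsto_diff[OF tendsto_const[of "1::real"] LIMSEQ_inverse_real_of_nat] by simp
  qed simp
  have wc: "weak_conv v x" by (rule weak_lim[OF refl sm vn gv uniq])
  have "(\<lambda>n. norm (v n)) \<longlonglongrightarrow> norm x" using vn nx by simp
  then have "v \<longlonglongrightarrow> x" using kk wc unfolding kadets_klee_def by blast
  then have "eventually (\<lambda>n. dist (v n) x < r) sequentially" using r by (simp add: tendsto_iff)
  then obtain N where "\<And>n. n \<ge> N \<Longrightarrow> dist (v n) x < r" unfolding eventually_sequentially by blast
  then have "dist (v N) x < r" by simp
  with vx[of N] show False by (simp add: dist_norm)
qed


lemma exists_not_in_span:
  fixes y :: "'a::real_normed_vector"
  assumes "dim_gt_one TYPE('a)"
  shows "\<exists>v. v \<notin> span {y}"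
proof (rule ccontr)
  assume "\<not> ?thesis"
  then have sub: "\<And>v. v \<in> span {y}" by blast
  obtain u1 u2 :: 'a where d: "u1 \<noteq> u2" and i: "independent {u1, u2}"
    using assms unfolding dim_gt_one_def by blast
  have "card {u1, u2} \<le> card {y}"
    using independent_span_bound[of "{y}" "{u1, u2}"] i sub by auto
  with d show False by simp
qed

lemma orth_ker:
  fixes f :: "'a::real_normed_vector \<Rightarrow>\<^sub>L real"
  assumes "norm f \<le> 1" "blinfun_apply f y = 1" "norm y = 1" "blinfun_apply f d = 0"
  shows "birkhoff_orth y d"
  unfolding birkhoff_orth_def
proof
  fix t :: real
  have "\<bar>blinfun_apply f (y + t *\<^sub>R d)\<bar> \<le> norm f * norm (y + t *\<^sub>R d)"
    using norm_blinfun[of f "y + t *\<^sub>R d"] by simp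
  also have "\<dots> \<le> norm (y + t *\<^sub>R d)"
    using assms(1) by (simp add: mult_left_le_one_le)
  finally show "norm y \<le> norm (y + t *\<^sub>R d)"
    using assms by (simp add: blinfun.add_right blinfun.scaleR_right)
qed

lemma conv_bound:
  fixes p q :: "'a::real_normed_vector"
  assumes "norm (p + q) \<le> 1" "norm (p - q) \<le> 1" "\<bar>t\<bar> \<le> 1"
  shows "norm (p + t *\<^sub>R q) \<le> 1"
proof -
  have gen: "a *\<^sub>R (p + q) + b *\<^sub>R (p - q) = (a + b) *\<^sub>R p + (a - b) *\<^sub>R q" for a b :: real
    by (simp add: algebra_simps)
  have e: "p + t *\<^sub>R q = ((1 + t) / 2) *\<^sub>R (p + q) + ((1 - t) / 2) *\<^sub>R (p - q)"
    unfolding gen by (simp add: field_simps)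
  have "norm (p + t *\<^sub>R q) \<le> norm (((1 + t) / 2) *\<^sub>R (p + q)) + norm (((1 - t) / 2) *\<^sub>R (p - q))"
    unfolding e by (rule norm_triangle_ineq)
  also have "\<dots> = ((1 + t) / 2) * norm (p + q) + ((1 - t) / 2) * norm (p - q)"
    using assms(3) by simp
  also have "\<dots> \<le> ((1 + t) / 2) * 1 + ((1 - t) / 2) * 1"
    using assms by (intro add_mono mult_left_mono) auto
  also have "\<dots> = 1" by (simp add: field_simps)
  finally show ?thesis .
qed


theorem mainTheorem7:
  fixes T :: "'a::banach \<Rightarrow>\<^sub>L 'b::banach" and x :: 'a
  assumes "dim_gt_one TYPE('a)" and "dim_gt_one TYPE('b)"
    and "smooth_space TYPE('a)" and "reflexive_space TYPE('a)" and "kadets_klee TYPE('a)"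
    and "smooth_space TYPE('b)"
    and "rank_one T" and "norm T = 1"
    and "norm_attain_set T = {x, -x}"
    and "CPP x (blinfun_apply T x)"
  shows "\<not> extreme_contraction T"
proof
  assume ext: "extreme_contraction T"
  have MT: "\<And>u. norm u = 1 \<and> norm (blinfun_apply T u) = 1 \<longleftrightarrow> u = x \<or> u = -x"
  proof -
    fix u
    have "u \<in> norm_attain_set T \<longleftrightarrow> u \<in> {x, -x}" using assms(9) by simp
    then show "norm u = 1 \<and> norm (blinfun_apply T u) = 1 \<longleftrightarrow> u = x \<or> u = -x"
      using assms(8) by (simp add: norm_attain_set_def)
  qed
  have nx: "norm x = 1" and nTx: "norm (blinfun_apply T x) = 1" using MT[of x] by auto
  define y where "y = blinfun_apply T x"
  have ny: "norm y = 1" using nTx by (simp add: y_def)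
  obtain \<psi> :: "'b \<Rightarrow>\<^sub>L real" where \<psi>: "norm \<psi> = 1" "blinfun_apply \<psi> y = 1"
    using assms(6) ny unfolding smooth_space_def by blast
  define g where "g = \<psi> o\<^sub>L T"
  have gapp: "blinfun_apply g v = blinfun_apply \<psi> (blinfun_apply T v)" for v
    by (simp add: g_def)
  have gn: "norm g \<le> 1"
    using norm_blinfun_compose[of \<psi> T] \<psi>(1) assms(8) by (simp add: g_def)
  have gx: "blinfun_apply g x = 1" using \<psi>(2) by (simp add: gapp y_def)
  obtain y0 where y0: "y0 \<noteq> 0" "range (blinfun_apply T) = span {y0}"
    using assms(7) unfolding rank_one_def by blast
  have inspan: "\<exists>c. blinfun_apply T v = c *\<^sub>R y0" for v
  proof -
    have "blinfun_apply T v \<in> span {y0}" using y0(2) by blast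
    then show ?thesis by (auto simp: span_singleton)
  qed
  obtain c0 where c0: "y = c0 *\<^sub>R y0" using inspan[of x] by (auto simp: y_def)
  have c0nz: "c0 \<noteq> 0" using c0 ny by auto
  have Tg: "blinfun_apply T v = blinfun_apply g v *\<^sub>R y" for v
  proof -
    obtain c where c: "blinfun_apply T v = c *\<^sub>R y0" using inspan by blast
    then have Tv: "blinfun_apply T v = (c / c0) *\<^sub>R y" using c0 c0nz by simp
    then have "blinfun_apply g v = c / c0" using \<psi>(2) by (simp add: gapp blinfun.scaleR_right)
    with Tv show ?thesis by simp
  qed
  have nT: "norm (blinfun_apply T v) = \<bar>blinfun_apply g v\<bar>" for v
    using Tg[of v] ny by simp
  have gle: "\<bar>blinfun_apply g v\<bar> \<le> norm v" for v
  proof -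
    have "\<bar>blinfun_apply g v\<bar> \<le> norm g * norm v" using norm_blinfun[of g v] by simp
    also have "\<dots> \<le> norm v" using gn by (simp add: mult_left_le_one_le)
    finally show ?thesis .
  qed
  have uniq: "u = x" if "norm u \<le> 1" "blinfun_apply g u = 1" for u
  proof -
    have "norm u = 1" using gle[of u] that by simp
    moreover have "norm (blinfun_apply T u) = 1" using nT that by simp
    ultimately have "u = x \<or> u = -x" using MT by blast
    moreover have "u \<noteq> -x" using that gx by (auto simp: blinfun.minus_right)
    ultimately show ?thesis by blast
  qed
  obtain r \<mu> where r: "r > 0" and mu: "\<mu> > 0" and cpp: "\<And>z w a b. z \<in> orth_set x \<inter> sphere 0 1 \<Longrightarrow>
        w \<in> orth_set y \<inter> sphere 0 1 \<Longrightarrow> a *\<^sub>R x + b *\<^sub>R z \<in> ball x r \<inter> sphere 0 1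
           \<Longrightarrow> norm (a *\<^sub>R y + (b * \<mu>) *\<^sub>R w) \<le> 1"
    using assms(10) unfolding CPP_def y_def by blast
  obtain \<delta> where dl: "\<delta> > 0" and gp: "\<And>u. norm u = 1 \<Longrightarrow> norm (u - x) \<ge> r \<Longrightarrow> norm (u + x) \<ge> r
            \<Longrightarrow> \<bar>blinfun_apply g u\<bar> \<le> 1 - \<delta>"
    using gap[OF assms(4,3,5) r gn nx uniq] by blast
  obtain w where w: "norm w = 1" "blinfun_apply \<psi> w = 0"
  proof -
    obtain v where v: "v \<notin> span {y}" using exists_not_in_span[OF assms(2)] by blast
    define w1 where "w1 = v - blinfun_apply \<psi> v *\<^sub>R y"
    have "w1 \<noteq> 0"
    proof
      assume "w1 = 0"
      then have "v = blinfun_apply \<psi> v *\<^sub>R y" by (simp add: w1_def)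
      then have "v \<in> span {y}" by (metis span_base span_scale singletonI)
      with v show False by blast
    qed
    moreover have "blinfun_apply \<psi> w1 = 0"
      using \<psi>(2) by (simp add: w1_def blinfun.diff_right blinfun.scaleR_right)
    ultimately show ?thesis
      by (intro that[of "w1 /\<^sub>R norm w1"]) (auto simp: blinfun.scaleR_right)
  qed
  have worth: "w \<in> orth_set y \<inter> sphere 0 1" "- w \<in> orth_set y \<inter> sphere 0 1"
    using orth_ker[of \<psi> y w] orth_ker[of \<psi> y "-w"] \<psi> ny w
    by (auto simp: orth_set_def blinfun.minus_right)
  obtain h0 :: "'a \<Rightarrow>\<^sub>L real" where h0: "norm h0 = 1" "blinfun_apply h0 x = 0"
  proof -
    obtain v where v: "v \<notin> span {x}" using exists_not_in_span[OF assms(1)] by blast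
    then have vnz: "v \<noteq> 0" by (metis span_zero)
    define v' where "v' = v /\<^sub>R norm v"
    have nv': "norm v' = 1" using vnz by (simp add: v'_def)
    obtain k :: "'a \<Rightarrow>\<^sub>L real" where k: "norm k = 1" "blinfun_apply k v' = 1"
      using assms(3) nv' unfolding smooth_space_def by blast
    define h1 where "h1 = k - blinfun_apply k x *\<^sub>R g"
    have h1x: "blinfun_apply h1 x = 0" using gx by (simp add: h1_def blinfun.diff_left scaleR_blinfun.rep_eq)
    have "h1 \<noteq> 0"
    proof
      assume "h1 = 0"
      then have kk: "blinfun_apply k u = blinfun_apply k x * blinfun_apply g u" for u
      proof -
        have "blinfun_apply h1 u = 0" using \<open>h1 = 0\<close> by simp
        then show ?thesis by (simp add: h1_def blinfun.diff_left scaleR_blinfun.rep_eq)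
      qed
      have kx: "\<bar>blinfun_apply k x\<bar> \<le> 1"
        using norm_blinfun[of k x] k(1) nx by simp
      have gv': "\<bar>blinfun_apply g v'\<bar> \<le> 1" using gle[of v'] nv' by simp
      have "1 = \<bar>blinfun_apply k x\<bar> * \<bar>blinfun_apply g v'\<bar>"
        using kk[of v'] k(2) by (simp add: abs_mult[symmetric])
      moreover have "\<bar>blinfun_apply k x\<bar> * \<bar>blinfun_apply g v'\<bar> \<le> \<bar>blinfun_apply g v'\<bar>"
        using kx by (intro mult_left_le_one_le) auto
      ultimately have "\<bar>blinfun_apply g v'\<bar> = 1" using gv' by linarith
      then have "norm (blinfun_apply T v') = 1" using nT by simp
      then have "v' = x \<or> v' = -x" using MT nv' by blast
      then have "v' \<in> span {x}" by (auto intro: span_base span_neg)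
      then have "norm v *\<^sub>R v' \<in> span {x}" by (rule span_scale)
      then show False using v vnz by (simp add: v'_def)
    qed
    then have "norm h1 > 0" by simp
    then show ?thesis
      by (intro that[of "h1 /\<^sub>R norm h1"]) (auto simp: scaleR_blinfun.rep_eq h1x)
  qed
  have h0le: "\<bar>blinfun_apply h0 v\<bar> \<le> norm v" for v
    using norm_blinfun[of h0 v] h0(1) by simp
  define \<epsilon> where "\<epsilon> = min \<mu> \<delta>"
  have eps: "\<epsilon> > 0" "\<epsilon> \<le> \<mu>" "\<epsilon> \<le> \<delta>" using mu dl by (auto simp: \<epsilon>_def)
  have near: "norm (blinfun_apply g u *\<^sub>R y + (c * blinfun_apply h0 u) *\<^sub>R w) \<le> 1"
    if u: "norm u = 1" "norm (u - x) < r" and c: "\<bar>c\<bar> \<le> \<mu>" for u c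
  proof -
    define a where "a = blinfun_apply g u"
    define d where "d = u - a *\<^sub>R x"
    have gd: "blinfun_apply g d = 0" using gx by (simp add: d_def a_def blinfun.diff_right blinfun.scaleR_right)
    have hd: "blinfun_apply h0 d = blinfun_apply h0 u" using h0(2) by (simp add: d_def blinfun.diff_right blinfun.scaleR_right)
    show ?thesis
    proof (cases "d = 0")
      case True
      then have "blinfun_apply h0 u = 0" using hd by simp
      then show ?thesis using gle[of u] u(1) ny by (simp add: a_def)
    next
      case False
      define b where "b = norm d"
      have bp: "b > 0" using False by (simp add: b_def)
      define z where "z = d /\<^sub>R b"
      have nz: "norm z = 1" using bp by (simp add: z_def b_def)
      have gz: "blinfun_apply g z = 0" using gd by (simp add: z_def blinfun.scaleR_right)
      have zo: "z \<in> orth_set x \<inter> sphere 0 1"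
        using orth_ker[OF gn gx nx gz] nz by (simp add: orth_set_def)
      have ueq: "a *\<^sub>R x + b *\<^sub>R z = u" using bp by (simp add: z_def d_def)
      have uin: "a *\<^sub>R x + b *\<^sub>R z \<in> ball x r \<inter> sphere 0 1"
        unfolding ueq using u by (simp add: dist_norm norm_minus_commute)
      have P1: "norm (a *\<^sub>R y + (b * \<mu>) *\<^sub>R w) \<le> 1" by (rule cpp[OF zo worth(1) uin])
      have P2: "norm (a *\<^sub>R y + (b * \<mu>) *\<^sub>R (- w)) \<le> 1" by (rule cpp[OF zo worth(2) uin])
      have hz: "blinfun_apply h0 u = b * blinfun_apply h0 z"
        using hd bp by (simp add: z_def blinfun.scaleR_right)
      define t where "t = c * blinfun_apply h0 z / \<mu>"
      have "\<bar>blinfun_apply h0 z\<bar> \<le> 1" using h0le[of z] nz by simp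
      then have "\<bar>c\<bar> * \<bar>blinfun_apply h0 z\<bar> \<le> \<mu> * 1" using c
        by (intro mult_mono) auto
      then have cz: "\<bar>c * blinfun_apply h0 z\<bar> \<le> \<mu>" by (simp only: abs_mult mult_1_right)
      have "\<bar>t\<bar> = \<bar>c * blinfun_apply h0 z\<bar> / \<mu>"
        unfolding t_def abs_divide using mu by simp
      also have "\<dots> \<le> 1" using cz mu by (simp add: pos_divide_le_eq)
      finally have tb: "\<bar>t\<bar> \<le> 1" .
      have P2': "norm (a *\<^sub>R y - (b * \<mu>) *\<^sub>R w) \<le> 1"
        using P2 by (simp only: scaleR_minus_right diff_conv_add_uminus)
      have nb: "norm (a *\<^sub>R y + t *\<^sub>R ((b * \<mu>) *\<^sub>R w)) \<le> 1"
        by (rule conv_bound[OF P1 P2' tb])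
      have eq: "t *\<^sub>R ((b * \<mu>) *\<^sub>R w) = (c * blinfun_apply h0 u) *\<^sub>R w"
        using mu by (simp add: t_def hz)
      show ?thesis using nb unfolding eq a_def .
    qed
  qed
  have unit: "norm (blinfun_apply g u *\<^sub>R y + (c * blinfun_apply h0 u) *\<^sub>R w) \<le> 1"
    if u: "norm u = 1" and c: "\<bar>c\<bar> \<le> \<epsilon>" for u c
  proof -
    have cm: "\<bar>c\<bar> \<le> \<mu>" using c eps by linarith
    consider "norm (u - x) < r" | "norm (u + x) < r" | "norm (u - x) \<ge> r" "norm (u + x) \<ge> r"
      by linarith
    then show ?thesis
    proof cases
      case 1 then show ?thesis using near[OF u 1 cm] by simp
    next
      case 2
      have "norm (- u) = 1" using u by simp
      moreover have "norm (- u - x) < r" using 2 by (simp add: norm_minus_commute add.commute)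
      ultimately have "norm (blinfun_apply g (- u) *\<^sub>R y + (c * blinfun_apply h0 (- u)) *\<^sub>R w) \<le> 1"
        using near cm by blast
      moreover have "blinfun_apply g (- u) *\<^sub>R y + (c * blinfun_apply h0 (- u)) *\<^sub>R w
          = - (blinfun_apply g u *\<^sub>R y + (c * blinfun_apply h0 u) *\<^sub>R w)"
        by (simp add: blinfun.minus_right)
      ultimately show ?thesis by (simp only: norm_minus_cancel)
    next
      case 3
      have g1: "\<bar>blinfun_apply g u\<bar> \<le> 1 - \<delta>" using gp[OF u 3] .
      have h1: "\<bar>c * blinfun_apply h0 u\<bar> \<le> \<epsilon>"
      proof -
        have "\<bar>blinfun_apply h0 u\<bar> \<le> 1" using h0le[of u] u by simp
        then have "\<bar>c\<bar> * \<bar>blinfun_apply h0 u\<bar> \<le> \<epsilon> * 1" using c by (intro mult_mono) auto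
        then show ?thesis by (simp only: abs_mult mult_1_right)
      qed
      have "norm (blinfun_apply g u *\<^sub>R y + (c * blinfun_apply h0 u) *\<^sub>R w)
          \<le> norm (blinfun_apply g u *\<^sub>R y) + norm ((c * blinfun_apply h0 u) *\<^sub>R w)"
        by (rule norm_triangle_ineq)
      also have "\<dots> = \<bar>blinfun_apply g u\<bar> + \<bar>c * blinfun_apply h0 u\<bar>"
        using ny w(1) by simp
      also have "\<dots> \<le> 1" using g1 h1 eps by linarith
      finally show ?thesis .
    qed
  qed
  have all: "norm (blinfun_apply g v *\<^sub>R y + (c * blinfun_apply h0 v) *\<^sub>R w) \<le> norm v"
    if c: "\<bar>c\<bar> \<le> \<epsilon>" for v c
  proof (cases "v = 0")
    case True then show ?thesis by simp
  next
    case False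
    define u where "u = v /\<^sub>R norm v"
    have nu: "norm u = 1" using False by (simp add: u_def)
    have vu: "v = norm v *\<^sub>R u" using False by (simp add: u_def)
    have "blinfun_apply g v *\<^sub>R y + (c * blinfun_apply h0 v) *\<^sub>R w
        = norm v *\<^sub>R (blinfun_apply g u *\<^sub>R y + (c * blinfun_apply h0 u) *\<^sub>R w)"
      by (subst (1 2) vu) (simp add: blinfun.scaleR_right scaleR_add_right)
    then have "norm (blinfun_apply g v *\<^sub>R y + (c * blinfun_apply h0 v) *\<^sub>R w)
        = norm v * norm (blinfun_apply g u *\<^sub>R y + (c * blinfun_apply h0 u) *\<^sub>R w)"
      by simp
    also have "\<dots> \<le> norm v * 1" using unit[OF nu c] by (intro mult_left_mono) auto
    finally show ?thesis by simp
  qed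
  have blS: "bounded_linear (\<lambda>v. (\<epsilon> * blinfun_apply h0 v) *\<^sub>R w)"
    by (intro bounded_linear_intros)
  define S where "S = Blinfun (\<lambda>v. (\<epsilon> * blinfun_apply h0 v) *\<^sub>R w)"
  have Sapp: "blinfun_apply S v = (\<epsilon> * blinfun_apply h0 v) *\<^sub>R w" for v
    using bounded_linear_Blinfun_apply[OF blS] by (simp add: S_def)
  have p: "norm (T + S) \<le> 1"
  proof (rule norm_blinfun_bound)
    fix v
    have "blinfun_apply (T + S) v = blinfun_apply g v *\<^sub>R y + (\<epsilon> * blinfun_apply h0 v) *\<^sub>R w"
      by (simp add: plus_blinfun.rep_eq Sapp Tg)
    then show "norm (blinfun_apply (T + S) v) \<le> 1 * norm v" using all[of \<epsilon> v] eps by simp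
  qed simp
  have m: "norm (T - S) \<le> 1"
  proof (rule norm_blinfun_bound)
    fix v
    have "blinfun_apply (T - S) v = blinfun_apply g v *\<^sub>R y + ((- \<epsilon>) * blinfun_apply h0 v) *\<^sub>R w"
      by (simp add: minus_blinfun.rep_eq Sapp Tg)
    then show "norm (blinfun_apply (T - S) v) \<le> 1 * norm v" using all[of "- \<epsilon>" v] eps by simp
  qed simp
  have Snz: "S \<noteq> 0"
  proof
    assume S0: "S = 0"
    have "h0 = 0"
    proof (rule blinfun_eqI)
      fix v
      have "blinfun_apply S v = 0" using S0 by simp
      then have "(\<epsilon> * blinfun_apply h0 v) *\<^sub>R w = 0" by (simp add: Sapp)
      then show "blinfun_apply h0 v = blinfun_apply 0 v" using eps w(1) by auto
    qed
    with h0(1) show False by simp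
  qed
  have ne: "T - S \<noteq> T + S"
  proof
    assume "T - S = T + S"
    then have "(T + S) - (T - S) = 0" by simp
    then have "S + S = 0" by (simp add: algebra_simps)
    then have "2 *\<^sub>R S = 0" by (simp add: scaleR_2)
    then show False using Snz by simp
  qed
  have mid: "midpoint (T - S) (T + S) = T"
    by (simp add: midpoint_def scaleR_add_right[symmetric])
  have "T \<in> open_segment (T - S) (T + S)"
    using midpoint_in_open_segment[of "T - S" "T + S"] ne mid by simp
  moreover have "T - S \<in> cball 0 1" "T + S \<in> cball 0 1" using p m by auto
  ultimately show False using ext unfolding extreme_contraction_def extreme_point_of_def by blast
qed

end
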